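(* Let $(S,\le)$ be a well-quasi-order and $k\in\mathbb{N}$. The set of all finite $k$-path bounded $S$-graphs, ordered by the induced subgraph ordering $\sqsubseteq$, is a well-quasi-order.
   Context: An $S$-graph is a finite undirected graph $(V,E,L)$ with labelling $L:V\to S$. For $S$-graphs $\theta_1=(V_1,E_1,L_1)$, $\theta_2=(V_2,E_2,L_2)$, $\theta_1\sqsubseteq\theta_2$ iff there is an injection $h:V_1\to V_2$ such that for all $u,v\in V_1$: $(u,v)\in E_1\iff(h(u),h(v))\in E_2$, and $L_1(u)\le L_2(h(u))$. A graph is $k$-path bounded if its longest simple path has length at most $k$. *)

theory Defs
  imports Main
begin

definition wqo_on :: "('a \<Rightarrow> 'a \<Rightarrow> bool) \<Rightarrow> 'a set \<Rightarrow> bool" where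
  "wqo_on le A \<longleftrightarrow>
     (\<forall>x\<in>A. le x x) \<and>
     (\<forall>x\<in>A. \<forall>y\<in>A. \<forall>z\<in>A. le x y \<longrightarrow> le y z \<longrightarrow> le x z) \<and>
     (\<forall>f::nat \<Rightarrow> 'a. (\<forall>i. f i \<in> A) \<longrightarrow> (\<exists>i j. i < j \<and> le (f i) (f j)))"

type_synonym ('v, 's) sgraph = "'v set \<times> ('v \<times> 'v) set \<times> ('v \<Rightarrow> 's)"

definition is_sgraph :: "'s set \<Rightarrow> ('v, 's) sgraph \<Rightarrow> bool" where
  "is_sgraph S G \<longleftrightarrow> (case G of (V, E, L) \<Rightarrow>
     finite V \<and> E \<subseteq> V \<times> V \<and> (\<forall>u v. (u, v) \<in> E \<longrightarrow> (v, u) \<in> E) \<and>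
     (\<forall>v. (v, v) \<notin> E) \<and> (\<forall>v\<in>V. L v \<in> S))"

definition sgraph_le :: "('s \<Rightarrow> 's \<Rightarrow> bool) \<Rightarrow> ('v, 's) sgraph \<Rightarrow> ('v, 's) sgraph \<Rightarrow> bool" where
  "sgraph_le le G1 G2 \<longleftrightarrow> (case G1 of (V1, E1, L1) \<Rightarrow> case G2 of (V2, E2, L2) \<Rightarrow>
     (\<exists>h. inj_on h V1 \<and> h ` V1 \<subseteq> V2 \<and>
          (\<forall>u\<in>V1. \<forall>v\<in>V1. (u, v) \<in> E1 \<longleftrightarrow> (h u, h v) \<in> E2) \<and>
          (\<forall>u\<in>V1. le (L1 u) (L2 (h u)))))"

text \<open>A simple path: a nonempty list of distinct vertices, consecutive ones adjacent.
  Its length is the number of edges, i.e. length xs - 1.\<close>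
definition simple_path :: "('v, 's) sgraph \<Rightarrow> 'v list \<Rightarrow> bool" where
  "simple_path G xs \<longleftrightarrow> (case G of (V, E, L) \<Rightarrow>
     xs \<noteq> [] \<and> distinct xs \<and> set xs \<subseteq> V \<and>
     (\<forall>i. Suc i < length xs \<longrightarrow> (xs ! i, xs ! Suc i) \<in> E))"

definition path_bounded :: "nat \<Rightarrow> ('v, 's) sgraph \<Rightarrow> bool" where
  "path_bounded k G \<longleftrightarrow> (\<forall>xs. simple_path G xs \<longrightarrow> length xs - 1 \<le> k)"

end

theory Submission imports Defs "HOL-Library.Sublist" "HOL-Library.Ramsey"
begin


lemma wqo_onD:
  fixes f :: "nat \<Rightarrow> 'a"
  assumes "wqo_on P A" "\<forall>i. f i \<in> A"
  shows "\<exists>i j. i < j \<and> P (f i) (f j)"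
proof -
  have "\<forall>f::nat \<Rightarrow> 'a. (\<forall>i. f i \<in> A) \<longrightarrow> (\<exists>i j. i < j \<and> P (f i) (f j))"
    using assms(1) unfolding wqo_on_def by (elim conjE)
  then have "(\<forall>i. f i \<in> A) \<longrightarrow> (\<exists>i j. i < j \<and> P (f i) (f j))" by (rule spec)
  then show ?thesis using assms(2) by (rule mp)
qed

lemma wqo_onI:
  assumes "\<And>x. x \<in> A \<Longrightarrow> P x x"
    "\<And>x y z. x \<in> A \<Longrightarrow> y \<in> A \<Longrightarrow> z \<in> A \<Longrightarrow> P x y \<Longrightarrow> P y z \<Longrightarrow> P x z"
    "\<And>f::nat \<Rightarrow> 'a. \<forall>i. f i \<in> A \<Longrightarrow> \<exists>i j. i < j \<and> P (f i) (f j)"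
  shows "wqo_on P A"
  unfolding wqo_on_def using assms by blast

lemma wqo_on_refl: "wqo_on P A \<Longrightarrow> x \<in> A \<Longrightarrow> P x x"
  unfolding wqo_on_def by (elim conjE) (rule bspec)

lemma wqo_on_trans: "wqo_on P A \<Longrightarrow> x \<in> A \<Longrightarrow> y \<in> A \<Longrightarrow> z \<in> A \<Longrightarrow> P x y \<Longrightarrow> P y z \<Longrightarrow> P x z"
  unfolding wqo_on_def by (elim conjE) (meson)

lemma wqo_subseq:
  fixes f :: "nat \<Rightarrow> 'a"
  assumes w: "wqo_on P A" and f: "\<forall>i. f i \<in> A"
  shows "\<exists>\<phi>::nat\<Rightarrow>nat. strict_mono \<phi> \<and> (\<forall>i j. i < j \<longrightarrow> P (f (\<phi> i)) (f (\<phi> j)))"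
proof -
  define c where "c X = (if P (f (Min X)) (f (Max X)) then 0 else (1::nat))" for X :: "nat set"
  have "\<forall>x\<in>(UNIV::nat set). \<forall>y\<in>UNIV. x \<noteq> y \<longrightarrow> c {x, y} < 2" by (simp add: c_def)
  from Ramsey2[OF infinite_UNIV_nat this] obtain Y t where
    Y: "infinite Y" "t < 2" "\<forall>x\<in>Y. \<forall>y\<in>Y. x\<noteq>y \<longrightarrow> c {x, y} = t" by blast
  define e where "e = enumerate Y"
  have sm: "strict_mono e" using Y(1) by (simp add: e_def strict_mono_enumerate)
  have eY: "e i \<in> Y" for i using Y(1) by (simp add: e_def enumerate_in_set)
  have ce: "c {e i, e j} = t" if "i < j" for i j
  proof -
    have "e i \<noteq> e j" using strict_monoD[OF sm that] by simp
    then show ?thesis using Y(3) eY[of i] eY[of j] by blast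
  qed
  have mm: "Min {e i, e j} = e i" "Max {e i, e j} = e j" if "i < j" for i j
    using strict_monoD[OF sm that] by simp_all
  show ?thesis
  proof (cases "t = 0")
    case True
    have "P (f (e i)) (f (e j))" if "i < j" for i j
      using ce[OF that] mm[OF that] True by (simp add: c_def split: if_splits)
    then show ?thesis using sm by (intro exI[of _ e] conjI allI impI)
  next
    case False
    then have t1: "t = 1" using Y(2) by simp
    have "\<forall>i. f (e i) \<in> A" using f by simp
    from wqo_onD[OF w this] obtain i j where "i < j" "P (f (e i)) (f (e j))" by blast
    then show ?thesis using ce[of i j] mm[of i j] t1 by (simp add: c_def)
  qed
qed

lemma wqo_prod_seq:
  fixes a :: "nat \<Rightarrow> 'a" and b :: "nat \<Rightarrow> 'b"
  assumes "wqo_on P A" "wqo_on Q B" "\<forall>i. a i \<in> A" "\<forall>i. b i \<in> B"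
  shows "\<exists>i j. i < j \<and> P (a i) (a j) \<and> Q (b i) (b j)"
proof -
  obtain \<phi> :: "nat \<Rightarrow> nat" where \<phi>: "strict_mono \<phi>" "\<forall>i j. i < j \<longrightarrow> P (a (\<phi> i)) (a (\<phi> j))"
    using wqo_subseq[OF assms(1,3)] by blast
  have "\<forall>i. b (\<phi> i) \<in> B" using assms(4) by simp
  from wqo_onD[OF assms(2), of "\<lambda>i. b (\<phi> i)"] this obtain i j where "i < j" "Q (b (\<phi> i)) (b (\<phi> j))" by blast
  then show ?thesis using \<phi> by (intro exI[of _ "\<phi> i"] exI[of _ "\<phi> j"]) (auto simp: strict_mono_less)
qed

lemma wqo_finite_eq: "finite B \<Longrightarrow> wqo_on (=) B"
  unfolding wqo_on_def
proof (intro conjI allI impI; (simp; fail)?)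
  fix f :: "nat \<Rightarrow> 'a" assume "finite B" "\<forall>i. f i \<in> B"
  then have "finite (range f)" by (meson finite_subset image_subsetI)
  then have "\<not> inj f" using finite_imageD infinite_UNIV_nat by blast
  then obtain i j where "i \<noteq> j" "f i = f j" unfolding inj_def by blast
  then show "\<exists>i j. i < j \<and> f i = f j" by (metis linorder_neqE_nat)
qed



lemma higman:
  assumes w: "wqo_on P A"
  shows "wqo_on (list_emb P) (lists A)"
proof (rule wqo_onI)
  fix xs assume "xs \<in> lists A"
  then show "list_emb P xs xs" by (intro list_emb_refl) (auto intro: wqo_on_refl[OF w])
next
  fix xs ys zs assume "xs \<in> lists A" "ys \<in> lists A" "zs \<in> lists A" "list_emb P xs ys" "list_emb P ys zs"
  then show "list_emb P xs zs"
    by (intro list_emb_trans[of xs ys zs P]) (auto intro: wqo_on_trans[OF w])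
next
  fix f :: "nat \<Rightarrow> 'a list" assume fA: "\<forall>i. f i \<in> lists A"
  show "\<exists>i j. i < j \<and> list_emb P (f i) (f j)"
  proof (rule ccontr)
    assume nb: "\<not> (\<exists>i j. i < j \<and> list_emb P (f i) (f j))"
    define BAD where "BAD g \<longleftrightarrow> (\<forall>i. g i \<in> lists A) \<and> (\<forall>i j. i < j \<longrightarrow> \<not> list_emb P (g i) (g j))"
      for g :: "nat \<Rightarrow> 'a list"
    have fB: "BAD f" using fA nb by (simp add: BAD_def)
    define ext where "ext p \<longleftrightarrow> (\<exists>g. BAD g \<and> (\<forall>i<length p. g i = p ! i))" for p
    define nxt where "nxt p = (ARG_MIN length x. ext (p @ [x]))" for p
    define pre where "pre n = ((\<lambda>p. p @ [nxt p]) ^^ n) []" for n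
    have pre_Suc: "pre (Suc n) = pre n @ [nxt (pre n)]" for n by (simp add: pre_def)
    have pre0: "pre 0 = []" by (simp add: pre_def)
    have len: "length (pre n) = n" for n by (induct n) (simp_all add: pre0 pre_Suc)
    have ext_step: "ext (p @ [nxt p])" if "ext p" for p
    proof -
      from that obtain g where g: "BAD g" "\<forall>i<length p. g i = p!i" unfolding ext_def by blast
      have "ext (p @ [g (length p)])" unfolding ext_def
      proof (intro exI[of _ g] conjI allI impI)
        fix i assume "i < length (p @ [g (length p)])"
        then show "g i = (p @ [g (length p)]) ! i" using g(2) by (auto simp: nth_append less_Suc_eq)
      qed (rule g(1))
      then show ?thesis unfolding nxt_def by (rule arg_min_natI)
    qed
    have extpre: "ext (pre n)" for n
    proof (induct n)
      case 0 then show ?case unfolding ext_def pre0 using fB by auto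
    next
      case (Suc n) then show ?case by (simp add: pre_Suc ext_step)
    qed
    define m where "m i = nxt (pre i)" for i
    have pre_nth: "i < n \<Longrightarrow> pre n ! i = m i" for i n
      by (induct n) (auto simp: pre_Suc nth_append len m_def less_Suc_eq)
    have mA: "m i \<in> lists A" for i
    proof -
      from extpre[of "Suc i"] obtain g where "BAD g" "\<forall>k<Suc i. g k = pre (Suc i) ! k"
        unfolding ext_def len by blast
      then have "BAD g" "g i = m i" using pre_nth[of i "Suc i"] by auto
      then show ?thesis unfolding BAD_def by metis
    qed
    have mbad: "\<not> list_emb P (m i) (m j)" if "i < j" for i j
    proof -
      from extpre[of "Suc j"] obtain g where "BAD g" "\<forall>k<Suc j. g k = pre (Suc j) ! k"
        unfolding ext_def len by blast
      then have "BAD g" "g i = m i" "g j = m j" using pre_nth[of _ "Suc j"] that by auto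
      then show ?thesis unfolding BAD_def using that by metis
    qed
    have mmin: "length (m n) \<le> length (g n)" if "BAD g" "\<forall>i<n. g i = m i" for g n
    proof -
      have "ext (pre n @ [g n])" unfolding ext_def
      proof (intro exI[of _ g] conjI allI impI)
        fix i assume "i < length (pre n @ [g n])"
        then show "g i = (pre n @ [g n]) ! i" using that(2) pre_nth[of i n]
          by (auto simp: nth_append len less_Suc_eq)
      qed (rule that(1))
      then show ?thesis unfolding m_def nxt_def by (rule arg_min_nat_le)
    qed
    have mne: "m i \<noteq> []" for i
      using mbad[of i "Suc i"] by (cases "m i") auto
    define a where "a i = hd (m i)" for i
    define t where "t i = tl (m i)" for i
    have mi: "m i = a i # t i" for i using mne[of i] by (simp add: a_def t_def)
    have aA: "\<forall>i. a i \<in> A" using mA mi by (metis Cons_in_lists_iff)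
    have tA: "t i \<in> lists A" for i using mA[of i] mi[of i] by (metis Cons_in_lists_iff)
    obtain \<phi> :: "nat \<Rightarrow> nat" where \<phi>: "strict_mono \<phi>" "\<forall>i j. i < j \<longrightarrow> P (a (\<phi> i)) (a (\<phi> j))"
      using wqo_subseq[OF w aA] by blast
    have \<phi>0: "\<phi> 0 \<le> \<phi> n" for n using \<phi>(1) by (simp add: strict_mono_less_eq)
    define g where "g n = (if n < \<phi> 0 then m n else t (\<phi> (n - \<phi> 0)))" for n
    have gB: "BAD g" unfolding BAD_def
    proof (intro conjI allI impI)
      fix i show "g i \<in> lists A" using mA tA by (simp add: g_def)
    next
      fix i j :: nat assume ij: "i < j"
      show "\<not> list_emb P (g i) (g j)"
      proof
        assume e: "list_emb P (g i) (g j)"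
        show False
        proof (cases "j < \<phi> 0")
          case True then show False using e ij mbad[OF ij] by (simp add: g_def)
        next
          case j: False
          show False
          proof (cases "i < \<phi> 0")
            case True
            then have "list_emb P (m i) (t (\<phi> (j - \<phi> 0)))" using e j by (simp add: g_def)
            then have "list_emb P (m i) (m (\<phi> (j - \<phi> 0)))" by (simp add: mi[of "\<phi> _"] list_emb_Cons)
            moreover have "i < \<phi> (j - \<phi> 0)" using True \<phi>0[of "j - \<phi> 0"] by simp
            ultimately show False using mbad by blast
          next
            case False
            define i' where "i' = i - \<phi> 0"
            define j' where "j' = j - \<phi> 0"
            have ij': "i' < j'" using False ij by (simp add: i'_def j'_def)
            have "list_emb P (t (\<phi> i')) (t (\<phi> j'))" using e j False by (simp add: g_def i'_def j'_def)
            then have "list_emb P (m (\<phi> i')) (m (\<phi> j'))"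
              using \<phi>(2) ij' by (simp add: mi[of "\<phi> _"] list_emb_Cons2)
            moreover have "\<phi> i' < \<phi> j'" using \<phi>(1) ij' by (simp add: strict_mono_less)
            ultimately show False using mbad by blast
          qed
        qed
      qed
    qed
    have "length (m (\<phi> 0)) \<le> length (g (\<phi> 0))"
      by (rule mmin[OF gB]) (simp add: g_def)
    then show False by (simp add: g_def mi)
  qed
qed



datatype 'a tree = Node (root: 'a) (kids: "'a tree list")

inductive temb :: "('a \<Rightarrow> 'a \<Rightarrow> bool) \<Rightarrow> 'a tree \<Rightarrow> 'a tree \<Rightarrow> bool" for P where
  "P a b \<Longrightarrow> list_emb (temb P) ts us \<Longrightarrow> temb P (Node a ts) (Node b us)"
monos list_emb_mono

lemma temb_Node_iff: "temb P (Node a ts) (Node b us) \<longleftrightarrow> P a b \<and> list_emb (temb P) ts us"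
  by (auto elim: temb.cases intro: temb.intros)

fun TS :: "'a set \<Rightarrow> nat \<Rightarrow> 'a tree set" where
  "TS A 0 = {}"
| "TS A (Suc h) = {Node a ts | a ts. a \<in> A \<and> ts \<in> lists (TS A h)}"

lemma wqo_TS: assumes w: "wqo_on P A" shows "wqo_on (temb P) (TS A h)"
proof (induct h)
  case 0 show ?case by (rule wqo_onI) auto
next
  case (Suc h)
  have L: "wqo_on (list_emb (temb P)) (lists (TS A h))" using higman[OF Suc] .
  show ?case
  proof (rule wqo_onI)
    fix x assume "x \<in> TS A (Suc h)"
    then obtain a ts where "x = Node a ts" "a \<in> A" "ts \<in> lists (TS A h)" by auto
    then show "temb P x x" using wqo_on_refl[OF w, of a] wqo_on_refl[OF L, of ts] by (simp add: temb_Node_iff)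
  next
    fix x y z assume "x \<in> TS A (Suc h)" "y \<in> TS A (Suc h)" "z \<in> TS A (Suc h)" "temb P x y" "temb P y z"
    then obtain a ts b us c vs where xyz: "x = Node a ts" "y = Node b us" "z = Node c vs"
      "a \<in> A" "b \<in> A" "c \<in> A" "ts \<in> lists (TS A h)" "us \<in> lists (TS A h)" "vs \<in> lists (TS A h)"
      by (auto simp: in_lists_conv_set)
    then have "P a b" "P b c" "list_emb (temb P) ts us" "list_emb (temb P) us vs"
      using \<open>temb P x y\<close> \<open>temb P y z\<close> by (simp_all add: temb_Node_iff)
    then have "P a c" "list_emb (temb P) ts vs"
      using wqo_on_trans[OF w, of a b c] wqo_on_trans[OF L, of ts us vs] xyz by simp_all
    then show "temb P x z" using xyz by (simp add: temb_Node_iff)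
  next
    fix f :: "nat \<Rightarrow> 'a tree" assume f: "\<forall>i. f i \<in> TS A (Suc h)"
    have fi: "f i = Node (root (f i)) (kids (f i))" for i by simp
    have "root (f i) \<in> A \<and> kids (f i) \<in> lists (TS A h)" for i
    proof -
      from f have "f i \<in> TS A (Suc h)" by (rule spec)
      then obtain a ts where "f i = Node a ts" "a \<in> A" "ts \<in> lists (TS A h)" by auto
      then show ?thesis by simp
    qed
    then have "\<forall>i. root (f i) \<in> A" "\<forall>i. kids (f i) \<in> lists (TS A h)" by simp_all
    from wqo_prod_seq[OF w L this] obtain i j where
      "i < j" "P (root (f i)) (root (f j))" "list_emb (temb P) (kids (f i)) (kids (f j))" by blast
    then show "\<exists>i j. i < j \<and> temb P (f i) (f j)"
      by (metis fi temb_Node_iff)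
  qed
qed



primrec tverts :: "'v tree \<Rightarrow> 'v set" where
  "tverts (Node v ts) = insert v (\<Union> (set (map tverts ts)))"

definition fverts :: "'v tree list \<Rightarrow> 'v set" where
  "fverts ts = (\<Union>t\<in>set ts. tverts t)"

lemma tverts_Node[simp]: "tverts (Node v ts) = insert v (fverts ts)"
  by (simp add: fverts_def)

declare tverts.simps[simp del]

lemma fverts_simps[simp]: "fverts [] = {}" "fverts (t # ts) = tverts t \<union> fverts ts"
  by (simp_all add: fverts_def)

fun sep :: "('v \<times> 'v) set \<Rightarrow> 'v tree list \<Rightarrow> bool" where
  "sep E [] = True"
| "sep E (t # ts) = (sep E ts \<and> tverts t \<inter> fverts ts = {} \<and>
      (\<forall>x\<in>tverts t. \<forall>y\<in>fverts ts. (x, y) \<notin> E \<and> (y, x) \<notin> E))"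

primrec wfT :: "('v \<times> 'v) set \<Rightarrow> 'v tree \<Rightarrow> bool" where
  "wfT E (Node v ts) = (v \<notin> fverts ts \<and> sep E ts \<and> list_all id (map (wfT E) ts))"

definition wfF :: "('v \<times> 'v) set \<Rightarrow> 'v tree list \<Rightarrow> bool" where
  "wfF E ts \<longleftrightarrow> sep E ts \<and> (\<forall>t\<in>set ts. wfT E t)"

lemma wfT_Node: "wfT E (Node v ts) \<longleftrightarrow> v \<notin> fverts ts \<and> wfF E ts"
  by (simp add: wfF_def list_all_iff)

declare wfT.simps[simp del]

lemma wfF_simps[simp]: "wfF E []" "wfF E (t # ts) \<longleftrightarrow> wfT E t \<and> wfF E ts \<and> tverts t \<inter> fverts ts = {} \<and>
      (\<forall>x\<in>tverts t. \<forall>y\<in>fverts ts. (x, y) \<notin> E \<and> (y, x) \<notin> E)"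
  by (auto simp: wfF_def)

primrec annot :: "('v \<times> 'v) set \<Rightarrow> ('v \<Rightarrow> 's) \<Rightarrow> 'v list \<Rightarrow> 'v tree \<Rightarrow> ('s \<times> nat set) tree" where
  "annot E L anc (Node v ts) = Node (L v, {i. i < length anc \<and> (anc ! i, v) \<in> E}) (map (annot E L (anc @ [v])) ts)"

definition lab_le :: "('s \<Rightarrow> 's \<Rightarrow> bool) \<Rightarrow> ('s \<times> nat set) \<Rightarrow> ('s \<times> nat set) \<Rightarrow> bool" where
  "lab_le le x y \<longleftrightarrow> le (fst x) (fst y) \<and> snd x = snd y"

lemma list_emb_map: "list_emb P (map f xs) (map g ys) \<longleftrightarrow> list_emb (\<lambda>x y. P (f x) (g y)) xs ys"
proof (induct ys arbitrary: xs)
  case Nil then show ?case by (cases xs) auto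
next
  case (Cons y ys) then show ?case
  proof (cases xs)
    case (Cons x xs') then show ?thesis using Cons.hyps[of "x # xs'"] Cons.hyps[of xs'] by (cases "P (f x) (g y)") simp_all
  qed simp
qed

locale two =
  fixes E1 :: "('v \<times> 'v) set" and E2 :: "('v \<times> 'v) set" and L1 :: "'v \<Rightarrow> 's" and L2 :: "'v \<Rightarrow> 's"
    and le :: "'s \<Rightarrow> 's \<Rightarrow> bool"
  assumes sym1: "(x, y) \<in> E1 \<Longrightarrow> (y, x) \<in> E1" and sym2: "(x', y') \<in> E2 \<Longrightarrow> (y', x') \<in> E2"
    and irr1: "(x, x) \<notin> E1" and irr2: "(x', x') \<notin> E2"
begin

definition GM :: "'v list \<Rightarrow> 'v list \<Rightarrow> 'v set \<Rightarrow> 'v set \<Rightarrow> ('v \<Rightarrow> 'v) \<Rightarrow> bool" where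
  "GM a1 a2 X Y h \<longleftrightarrow> inj_on h X \<and> h ` X \<subseteq> Y \<and> (\<forall>x\<in>X. le (L1 x) (L2 (h x))) \<and>
     (\<forall>x\<in>X. \<forall>i<length a1. (a1 ! i, x) \<in> E1 \<longleftrightarrow> (a2 ! i, h x) \<in> E2) \<and>
     (\<forall>x\<in>X. \<forall>y\<in>X. (x, y) \<in> E1 \<longleftrightarrow> (h x, h y) \<in> E2)"

lemma forest_emb:
  assumes "list_emb Q ts us"
    and "\<And>t u. t \<in> set ts \<Longrightarrow> u \<in> set us \<Longrightarrow> Q t u \<Longrightarrow> wfT E1 t \<Longrightarrow> wfT E2 u \<Longrightarrow>
           \<exists>h. GM a1 a2 (tverts t) (tverts u) h"
    and "wfF E1 ts" "wfF E2 us"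
  shows "\<exists>h. GM a1 a2 (fverts ts) (fverts us) h"
  using assms
proof induct
  case (list_emb_Nil ys) show ?case by (simp add: GM_def)
next
  case (list_emb_Cons xs ys y)
  then obtain h where "GM a1 a2 (fverts xs) (fverts ys) h" by auto
  then have "GM a1 a2 (fverts xs) (fverts (y # ys)) h" by (auto simp: GM_def)
  then show ?case by blast
next
  case (list_emb_Cons2 x y xs ys)
  have "wfT E1 x" "wfT E2 y" using list_emb_Cons2.prems(2,3) by simp_all
  then obtain h1 where h1: "GM a1 a2 (tverts x) (tverts y) h1"
    using list_emb_Cons2.prems(1)[of x y] list_emb_Cons2.hyps(1) by auto
  from list_emb_Cons2 obtain h2 where h2: "GM a1 a2 (fverts xs) (fverts ys) h2" by auto
  have s1: "tverts x \<inter> fverts xs = {}" "\<forall>u\<in>tverts x. \<forall>v\<in>fverts xs. (u, v) \<notin> E1 \<and> (v, u) \<notin> E1"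
    using list_emb_Cons2.prems(2) by simp_all
  have s2: "tverts y \<inter> fverts ys = {}" "\<forall>u\<in>tverts y. \<forall>v\<in>fverts ys. (u, v) \<notin> E2 \<and> (v, u) \<notin> E2"
    using list_emb_Cons2.prems(3) by simp_all
  define h where "h z = (if z \<in> tverts x then h1 z else h2 z)" for z
  have hx: "z \<in> tverts x \<Longrightarrow> h z = h1 z" and hxs: "z \<in> fverts xs \<Longrightarrow> h z = h2 z" for z
    using s1(1) by (auto simp: h_def)
  have i1: "h1 z \<in> tverts y" if "z \<in> tverts x" for z using h1 that by (auto simp: GM_def)
  have i2: "h2 z \<in> fverts ys" if "z \<in> fverts xs" for z using h2 that by (auto simp: GM_def)
  have "GM a1 a2 (tverts x \<union> fverts xs) (tverts y \<union> fverts ys) h"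
    unfolding GM_def
  proof (intro conjI ballI allI impI)
    show "inj_on h (tverts x \<union> fverts xs)"
    proof (rule inj_onI)
      fix u v assume u: "u \<in> tverts x \<union> fverts xs" and v: "v \<in> tverts x \<union> fverts xs" and e: "h u = h v"
      show "u = v"
      proof (cases "u \<in> tverts x")
        case True note ut = True
        show ?thesis
        proof (cases "v \<in> tverts x")
          case True then show ?thesis using ut e h1 hx by (auto simp: GM_def inj_on_def)
        next
          case False then have "v \<in> fverts xs" using v by simp
          then show ?thesis using ut e hx hxs i1 i2 s2(1) by force
        qed
      next
        case False note uf = False
        then have uxs: "u \<in> fverts xs" using u by simp
        show ?thesis
        proof (cases "v \<in> tverts x")
          case True then show ?thesis using uxs e hx hxs i1 i2 s2(1) by force
        next
          case False then have "v \<in> fverts xs" using v by simp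
          then show ?thesis using uxs e h2 hxs by (auto simp: GM_def inj_on_def)
        qed
      qed
    qed
  next
    show "h ` (tverts x \<union> fverts xs) \<subseteq> tverts y \<union> fverts ys" using hx hxs i1 i2 by auto
  next
    fix z assume "z \<in> tverts x \<union> fverts xs"
    then show "le (L1 z) (L2 (h z))" using hx hxs h1 h2 by (auto simp: GM_def)
  next
    fix z i assume "z \<in> tverts x \<union> fverts xs" "i < length a1"
    then show "(a1 ! i, z) \<in> E1 \<longleftrightarrow> (a2 ! i, h z) \<in> E2" using hx hxs h1 h2 by (auto simp: GM_def)
  next
    fix u v assume u: "u \<in> tverts x \<union> fverts xs" and v: "v \<in> tverts x \<union> fverts xs"
    show "(u, v) \<in> E1 \<longleftrightarrow> (h u, h v) \<in> E2"
    proof (cases "u \<in> tverts x")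
      case True note ut = True
      show ?thesis
      proof (cases "v \<in> tverts x")
        case True then show ?thesis using ut h1 hx by (auto simp: GM_def)
      next
        case False then have vv: "v \<in> fverts xs" using v by simp
        then have "(u, v) \<notin> E1" using ut s1(2) by blast
        moreover have "(h u, h v) \<notin> E2" using vv ut hx hxs i1 i2 s2(2) by auto
        ultimately show ?thesis by simp
      qed
    next
      case False
      then have uu: "u \<in> fverts xs" using u by simp
      show ?thesis
      proof (cases "v \<in> tverts x")
        case True
        then have "(u, v) \<notin> E1" using uu s1(2) by blast
        moreover have "(h u, h v) \<notin> E2" using True uu hx hxs i1 i2 s2(2) by auto
        ultimately show ?thesis by simp
      next
        case False then have "v \<in> fverts xs" using v by simp
        then show ?thesis using uu h2 hxs by (auto simp: GM_def)
      qed
    qed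
  qed
  then show ?case by auto
qed

end



context two begin

lemma tree_emb:
  "temb (lab_le le) (annot E1 L1 a1 t) (annot E2 L2 a2 u) \<Longrightarrow> length a1 = length a2 \<Longrightarrow>
   wfT E1 t \<Longrightarrow> wfT E2 u \<Longrightarrow> \<exists>h. GM a1 a2 (tverts t) (tverts u) h"
proof (induct t arbitrary: u a1 a2)
  case (Node v ts)
  obtain w us where u: "u = Node w us" by (cases u)
  define D1 where "D1 = {i. i < length a1 \<and> (a1 ! i, v) \<in> E1}"
  define D2 where "D2 = {i. i < length a2 \<and> (a2 ! i, w) \<in> E2}"
  from Node.prems(1) have "lab_le le (L1 v, D1) (L2 w, D2)"
    "list_emb (temb (lab_le le)) (map (annot E1 L1 (a1 @ [v])) ts) (map (annot E2 L2 (a2 @ [w])) us)"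
    by (simp_all add: u temb_Node_iff D1_def D2_def)
  then have lab: "le (L1 v) (L2 w)" "D1 = D2"
    and le: "list_emb (\<lambda>t u. temb (lab_le le) (annot E1 L1 (a1 @ [v]) t) (annot E2 L2 (a2 @ [w]) u)) ts us"
    by (simp_all add: lab_le_def list_emb_map)
  have wf1: "v \<notin> fverts ts" "wfF E1 ts" using Node.prems(3) by (simp_all add: wfT_Node)
  have wf2: "w \<notin> fverts us" "wfF E2 us" using Node.prems(4) by (simp_all add: wfT_Node u)
  have len: "length (a1 @ [v]) = length (a2 @ [w])" using Node.prems(2) by simp
  obtain h' where h': "GM (a1 @ [v]) (a2 @ [w]) (fverts ts) (fverts us) h'"
  proof -
    have "\<exists>h. GM (a1 @ [v]) (a2 @ [w]) (fverts ts) (fverts us) h"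
      by (rule forest_emb[OF le _ wf1(2) wf2(2)]) (rule Node.hyps[OF _ _ len], assumption+)
    then show ?thesis using that by blast
  qed
  define h where "h = h'(v := w)"
  have hv: "h v = w" and hx: "x \<in> fverts ts \<Longrightarrow> h x = h' x" for x using wf1(1) by (auto simp: h_def)
  have img: "h' x \<in> fverts us" if "x \<in> fverts ts" for x using h' that by (auto simp: GM_def)
  have injh': "inj_on h' (fverts ts)" using h' by (simp add: GM_def)
  have edh': "\<forall>x\<in>fverts ts. \<forall>y\<in>fverts ts. (x, y) \<in> E1 \<longleftrightarrow> (h' x, h' y) \<in> E2"
    using h' by (simp add: GM_def)
  have labh': "\<forall>x\<in>fverts ts. le (L1 x) (L2 (h' x))" using h' by (simp add: GM_def)
  have ancA: "\<forall>x\<in>fverts ts. \<forall>i<length (a1 @ [v]). ((a1 @ [v]) ! i, x) \<in> E1 \<longleftrightarrow> ((a2 @ [w]) ! i, h' x) \<in> E2"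
    using h' unfolding GM_def by (elim conjE)
  have anc: "((a1 @ [v]) ! i, x) \<in> E1 \<longleftrightarrow> ((a2 @ [w]) ! i, h' x) \<in> E2" if "x \<in> fverts ts" "i < length (a1 @ [v])" for x i
    using ancA that by blast
  have "GM a1 a2 (insert v (fverts ts)) (insert w (fverts us)) h"
    unfolding GM_def
  proof (intro conjI ballI allI impI)
    show "inj_on h (insert v (fverts ts))"
    proof (rule inj_onI)
      fix x y assume x: "x \<in> insert v (fverts ts)" and y: "y \<in> insert v (fverts ts)" and e: "h x = h y"
      show "x = y"
      proof (cases "x = v")
        case True
        then show ?thesis using e y hv hx img wf2(1) by (metis insertE)
      next
        case False
        then have xt: "x \<in> fverts ts" using x by simp
        show ?thesis
        proof (cases "y = v")
          case True then show ?thesis using e xt hv hx img wf2(1) by metis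
        next
          case False then have "y \<in> fverts ts" using y by simp
          then show ?thesis using xt e hx injh' by (simp add: inj_on_def)
        qed
      qed
    qed
  next
    show "h ` insert v (fverts ts) \<subseteq> insert w (fverts us)" using img hx hv by auto
  next
    fix x assume "x \<in> insert v (fverts ts)"
    then show "le (L1 x) (L2 (h x))" using lab(1) labh' hx hv by auto
  next
    fix x i assume x: "x \<in> insert v (fverts ts)" and i: "i < length a1"
    show "(a1 ! i, x) \<in> E1 \<longleftrightarrow> (a2 ! i, h x) \<in> E2"
    proof (cases "x = v")
      case True
      have "i \<in> D1 \<longleftrightarrow> i \<in> D2" using lab(2) by simp
      then show ?thesis using True i Node.prems(2) hv by (simp add: D1_def D2_def)
    next
      case False
      then have "x \<in> fverts ts" using x by simp
      then show ?thesis using anc[of x i] i Node.prems(2) hx by (simp add: nth_append)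
    qed
  next
    fix x y assume x: "x \<in> insert v (fverts ts)" and y: "y \<in> insert v (fverts ts)"
    have vx: "(v, z) \<in> E1 \<longleftrightarrow> (w, h z) \<in> E2" if "z \<in> fverts ts" for z
      using anc[OF that, of "length a1"] Node.prems(2) hx[OF that] by (simp add: nth_append)
    show "(x, y) \<in> E1 \<longleftrightarrow> (h x, h y) \<in> E2"
    proof (cases "x = v")
      case True note xv = True
      show ?thesis
      proof (cases "y = v")
        case True then show ?thesis using xv hv irr1 irr2 by simp
      next
        case False then have "y \<in> fverts ts" using y by simp
        then show ?thesis using xv vx hv by simp
      qed
    next
      case False then have xt: "x \<in> fverts ts" using x by simp
      show ?thesis
      proof (cases "y = v")
        case True
        have "(x, v) \<in> E1 \<longleftrightarrow> (v, x) \<in> E1" using sym1 by blast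
        moreover have "(h x, w) \<in> E2 \<longleftrightarrow> (w, h x) \<in> E2" using sym2 by blast
        ultimately show ?thesis using True xt vx hv by simp
      next
        case False then have "y \<in> fverts ts" using y by simp
        then show ?thesis using xt edh' hx by simp
      qed
    qed
  qed
  then have "GM a1 a2 (tverts (Node v ts)) (tverts u) h" by (simp add: u)
  then show ?case by blast
qed

end



primrec chained :: "('v \<times> 'v) set \<Rightarrow> 'v tree \<Rightarrow> bool" where
  "chained E (Node v ts) = ((\<forall>t\<in>set ts. (v, root t) \<in> E) \<and> list_all id (map (chained E) ts))"

lemma chained_Node[simp]: "chained E (Node v ts) \<longleftrightarrow> (\<forall>t\<in>set ts. (v, root t) \<in> E \<and> chained E t)"
  by (auto simp: list_all_iff)

declare chained.simps[simp del]

lemma build: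
  assumes sym: "\<And>x y. (x, y) \<in> E \<Longrightarrow> (y, x) \<in> E"
  shows "finite W \<Longrightarrow> (\<forall>x\<in>W. \<exists>y\<in>R \<inter> W. (x, y) \<in> (E \<inter> W \<times> W)\<^sup>*) \<Longrightarrow>
    \<exists>F. wfF E F \<and> fverts F = W \<and> (\<forall>t\<in>set F. root t \<in> R \<and> chained E t)"
proof (induct "card W" arbitrary: W R rule: less_induct)
  case less
  show ?case
  proof (cases "W = {}")
    case True then show ?thesis by (intro exI[of _ "[]"]) simp
  next
    case False
    then obtain x0 where "x0 \<in> W" by blast
    then obtain r where r: "r \<in> R" "r \<in> W" using less.prems(2) by blast
    define rel where "rel = E \<inter> W \<times> W"
    define C where "C = {y. (r, y) \<in> rel\<^sup>*}"
    define W' where "W' = W - C"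
    define C' where "C' = C - {r}"
    have relW: "(a, b) \<in> rel \<Longrightarrow> a \<in> W \<and> b \<in> W" for a b by (simp add: rel_def)
    have relsym: "(a, b) \<in> rel \<Longrightarrow> (b, a) \<in> rel" for a b by (auto simp: rel_def sym)
    have CW: "C \<subseteq> W"
    proof
      fix y assume "y \<in> C"
      then have "(r, y) \<in> rel\<^sup>*" by (simp add: C_def)
      then show "y \<in> W" by (induct) (auto simp: r relW)
    qed
    have rC: "r \<in> C" by (simp add: C_def)
    have Cstep: "y \<in> C" if "x \<in> C" "(x, y) \<in> rel" for x y
      using that by (auto simp: C_def intro: rtrancl_into_rtrancl)
    have fin: "finite W'" "finite C'" using less.prems(1) CW by (auto simp: W'_def C'_def intro: finite_subset)
    have cW': "card W' < card W" using less.prems(1) rC r(2) by (auto simp: W'_def intro!: psubset_card_mono)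
    have finC: "finite C" using less.prems(1) CW by (rule finite_subset[rotated])
    have "card C' < card C" unfolding C'_def using finC rC by (rule card_Diff1_less)
    moreover have "card C \<le> card W" using less.prems(1) CW by (rule card_mono)
    ultimately have cC': "card C' < card W" by simp
    have stay: "(x, y) \<in> (E \<inter> W' \<times> W')\<^sup>* \<and> y \<in> W'" if "(x, y) \<in> rel\<^sup>*" "x \<in> W'" for x y
      using that(1)
    proof induct
      case base then show ?case using that(2) by simp
    next
      case (step z y)
      then have z: "z \<in> W'" "(x, z) \<in> (E \<inter> W' \<times> W')\<^sup>*" by auto
      have "y \<in> W" using step(2) relW by blast
      moreover have "y \<notin> C"
      proof
        assume "y \<in> C"
        then have "z \<in> C" using Cstep relsym[OF step(2)] by blast
        then show False using z(1) by (simp add: W'_def)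
      qed
      ultimately have y: "y \<in> W'" by (simp add: W'_def)
      have "(z, y) \<in> E \<inter> W' \<times> W'" using step(2) y z(1) by (simp add: rel_def)
      then show ?case using z(2) y by (meson rtrancl_into_rtrancl)
    qed
    have hW': "\<forall>x\<in>W'. \<exists>y\<in>R \<inter> W'. (x, y) \<in> (E \<inter> W' \<times> W')\<^sup>*"
    proof
      fix x assume x: "x \<in> W'"
      then have "x \<in> W" by (simp add: W'_def)
      then obtain y where y: "y \<in> R" "y \<in> W" "(x, y) \<in> rel\<^sup>*" using less.prems(2) by (auto simp: rel_def)
      from stay[OF y(3) x] y(1) show "\<exists>y\<in>R \<inter> W'. (x, y) \<in> (E \<inter> W' \<times> W')\<^sup>*" by blast
    qed
    obtain F2 where F2: "wfF E F2" "fverts F2 = W'" "\<forall>t\<in>set F2. root t \<in> R \<and> chained E t"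
      using less.hyps[OF cW' fin(1) hW'] by blast
    have relsym': "converse rel = rel" using relsym by auto
    have bk: "x \<in> C' \<longrightarrow> (\<exists>y\<in>C'. (r, y) \<in> E \<and> (x, y) \<in> (E \<inter> C' \<times> C')\<^sup>*)" if "(x, r) \<in> rel\<^sup>*" for x
      using that
    proof (induct rule: converse_rtrancl_induct)
      case base then show ?case by (simp add: C'_def)
    next
      case (step x z)
      show ?case
      proof
        assume x: "x \<in> C'"
        show "\<exists>y\<in>C'. (r, y) \<in> E \<and> (x, y) \<in> (E \<inter> C' \<times> C')\<^sup>*"
        proof (cases "z = r")
          case True
          then have "(r, x) \<in> E" using step(1) sym by (simp add: rel_def)
          then show ?thesis using x by blast
        next
          case False
          have "x \<in> C" using x by (simp add: C'_def)
          then have "z \<in> C" using Cstep step(1) by blast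
          then have z: "z \<in> C'" using False by (simp add: C'_def)
          then obtain y where y: "y \<in> C'" "(r, y) \<in> E" "(z, y) \<in> (E \<inter> C' \<times> C')\<^sup>*" using step(3) by blast
          have "(x, z) \<in> E \<inter> C' \<times> C'" using step(1) x z by (simp add: rel_def)
          then have "(x, y) \<in> (E \<inter> C' \<times> C')\<^sup>*" using y(3) by (meson converse_rtrancl_into_rtrancl)
          then show ?thesis using y by blast
        qed
      qed
    qed
    have hC': "\<forall>x\<in>C'. \<exists>y\<in>{y. (r, y) \<in> E} \<inter> C'. (x, y) \<in> (E \<inter> C' \<times> C')\<^sup>*"
    proof
      fix x assume x: "x \<in> C'"
      then have "(r, x) \<in> rel\<^sup>*" by (simp add: C'_def C_def)
      then have "(x, r) \<in> (converse rel)\<^sup>*" by (simp add: rtrancl_converse)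
      then have "(x, r) \<in> rel\<^sup>*" using relsym' by simp
      then show "\<exists>y\<in>{y. (r, y) \<in> E} \<inter> C'. (x, y) \<in> (E \<inter> C' \<times> C')\<^sup>*" using bk x by blast
    qed
    obtain F1 where F1: "wfF E F1" "fverts F1 = C'" "\<forall>t\<in>set F1. root t \<in> {y. (r, y) \<in> E} \<and> chained E t"
      using less.hyps[OF cC' fin(2) hC'] by blast
    have noedge: "(a, b) \<notin> E" if "a \<in> C" "b \<in> W'" for a b
    proof
      assume "(a, b) \<in> E"
      then have "(a, b) \<in> rel" using that CW by (auto simp: rel_def W'_def)
      then have "b \<in> C" using Cstep that(1) by blast
      then show False using that(2) by (simp add: W'_def)
    qed
    have Ceq: "insert r C' = C" using rC by (auto simp: C'_def)
    have w1: "wfT E (Node r F1)" using F1(1,2) by (simp add: wfT_Node C'_def)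
    have tv: "tverts (Node r F1) = C" using F1(2) Ceq by simp
    have ne: "\<forall>x\<in>C. \<forall>y\<in>W'. (x, y) \<notin> E \<and> (y, x) \<notin> E" using noedge sym by blast
    have "C \<inter> W' = {}" by (auto simp: W'_def)
    then have "wfF E (Node r F1 # F2)"
      using w1 tv ne F2(1,2) by simp
    moreover have "fverts (Node r F1 # F2) = W" using F1(2) F2(2) Ceq CW by (auto simp: W'_def)
    moreover have "\<forall>t\<in>set (Node r F1 # F2). root t \<in> R \<and> chained E t" using F1(3) F2(3) r(1) by auto
    ultimately show ?thesis by blast
  qed
qed



lemma simple_path_iff: "simple_path (V, E, L) xs \<longleftrightarrow> xs \<noteq> [] \<and> distinct xs \<and> set xs \<subseteq> V \<and>
     (\<forall>i. Suc i < length xs \<longrightarrow> (xs ! i, xs ! Suc i) \<in> E)"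
  by (simp add: simple_path_def)

lemma depth:
  assumes G: "is_sgraph S (V, E, L)" and pb: "path_bounded k (V, E, L)"
  shows "chained E t \<Longrightarrow> wfT E t \<Longrightarrow> tverts t \<subseteq> V \<Longrightarrow>
    (anc = [] \<or> (simple_path (V, E, L) anc \<and> (last anc, root t) \<in> E)) \<Longrightarrow>
    set anc \<inter> tverts t = {} \<Longrightarrow> k + 1 \<le> length anc + h \<Longrightarrow>
    annot E L anc t \<in> TS (S \<times> Pow {..<k}) h"
proof (induct t arbitrary: anc h)
  case (Node v ts)
  have vV: "v \<in> V" using Node.prems(3) by simp
  have vanc: "v \<notin> set anc" using Node.prems(5) by auto
  have sp: "simple_path (V, E, L) (anc @ [v])"
    unfolding simple_path_iff
  proof (intro conjI allI impI)
    show "anc @ [v] \<noteq> []" by simp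
    show "distinct (anc @ [v])" using Node.prems(4) vanc by (auto simp: simple_path_iff)
    show "set (anc @ [v]) \<subseteq> V" using Node.prems(4) vV by (auto simp: simple_path_iff)
  next
    fix i assume i: "Suc i < length (anc @ [v])"
    show "((anc @ [v]) ! i, (anc @ [v]) ! Suc i) \<in> E"
    proof (cases "Suc i < length anc")
      case True
      then show ?thesis using Node.prems(4) by (auto simp: simple_path_iff nth_append)
    next
      case False
      then have si: "Suc i = length anc" using i by simp
      then have "anc \<noteq> []" by auto
      then have "simple_path (V, E, L) anc \<and> (last anc, v) \<in> E" using Node.prems(4) by simp
      moreover have "last anc = anc ! i"
      proof -
        have "i = length anc - 1" using si by simp
        then show ?thesis using \<open>anc \<noteq> []\<close> by (simp add: last_conv_nth)
      qed
      ultimately show ?thesis using si by (simp add: nth_append)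
    qed
  qed
  then have "length (anc @ [v]) - 1 \<le> k" using pb unfolding path_bounded_def by blast
  then have lk: "length anc \<le> k" by simp
  then obtain h' where h: "h = Suc h'" using Node.prems(6) by (cases h) auto
  have lab: "(L v, {i. i < length anc \<and> (anc ! i, v) \<in> E}) \<in> S \<times> Pow {..<k}"
    using G vV lk by (auto simp: is_sgraph_def)
  have wf: "v \<notin> fverts ts" "wfF E ts" using Node.prems(2) by (simp_all add: wfT_Node)
  have kids: "annot E L (anc @ [v]) t \<in> TS (S \<times> Pow {..<k}) h'" if t: "t \<in> set ts" for t
  proof (rule Node.hyps[OF t])
    show "chained E t" using Node.prems(1) t by simp
    show "wfT E t" using wf(2) t by (simp add: wfF_def)
    have sub: "tverts t \<subseteq> fverts ts" using t by (auto simp: fverts_def)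
    then show "tverts t \<subseteq> V" using Node.prems(3) by auto
    show "anc @ [v] = [] \<or> simple_path (V, E, L) (anc @ [v]) \<and> (last (anc @ [v]), root t) \<in> E"
      using sp Node.prems(1) t by simp
    show "set (anc @ [v]) \<inter> tverts t = {}" using Node.prems(5) sub wf(1) by auto
    show "k + 1 \<le> length (anc @ [v]) + h'" using Node.prems(6) h by simp
  qed
  show ?case using lab kids h by auto
qed

lemma wqo_lab:
  fixes le :: "'s \<Rightarrow> 's \<Rightarrow> bool"
  assumes w: "wqo_on le S"
  shows "wqo_on (lab_le le) (S \<times> Pow {..<k})"
proof (rule wqo_onI)
  fix x assume "x \<in> S \<times> Pow {..<k}"
  then show "lab_le le x x" using wqo_on_refl[OF w, of "fst x"] by (auto simp: lab_le_def)
next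
  fix x y z assume "x \<in> S \<times> Pow {..<k}" "y \<in> S \<times> Pow {..<k}" "z \<in> S \<times> Pow {..<k}"
    "lab_le le x y" "lab_le le y z"
  then show "lab_le le x z" using wqo_on_trans[OF w, of "fst x" "fst y" "fst z"] by (auto simp: lab_le_def)
next
  fix f :: "nat \<Rightarrow> 's \<times> nat set" assume f: "\<forall>i. f i \<in> S \<times> Pow {..<k}"
  have fin: "wqo_on (=) (Pow {..<k})" by (rule wqo_finite_eq) simp
  have "\<forall>i. fst (f i) \<in> S" "\<forall>i. snd (f i) \<in> Pow {..<k}" using f by (simp_all add: mem_Times_iff)
  from wqo_prod_seq[OF w fin this] obtain i j where "i < j" "le (fst (f i)) (fst (f j))" "snd (f i) = snd (f j)"
    by blast
  then show "\<exists>i j. i < j \<and> lab_le le (f i) (f j)" by (auto simp: lab_le_def)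
qed



lemma sgraph_le_refl:
  assumes w: "wqo_on le S" and G: "is_sgraph S G" shows "sgraph_le le G G"
proof -
  obtain V E L where g: "G = (V, E, L)" by (cases G)
  have "\<forall>u\<in>V. le (L u) (L u)" using G wqo_on_refl[OF w] by (auto simp: g is_sgraph_def)
  then show ?thesis unfolding g sgraph_le_def by (simp add: exI[of _ id])
qed

lemma sgraph_le_trans:
  assumes w: "wqo_on le S" and G: "is_sgraph S G1" "is_sgraph S G2" "is_sgraph S G3"
    and a: "sgraph_le le G1 G2" "sgraph_le le G2 G3"
  shows "sgraph_le le G1 G3"
proof -
  obtain V1 E1 L1 where g1: "G1 = (V1, E1, L1)" by (cases G1)
  obtain V2 E2 L2 where g2: "G2 = (V2, E2, L2)" by (cases G2)
  obtain V3 E3 L3 where g3: "G3 = (V3, E3, L3)" by (cases G3)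
  obtain h1 where h1: "inj_on h1 V1" "h1 ` V1 \<subseteq> V2" "\<forall>u\<in>V1. \<forall>v\<in>V1. (u, v) \<in> E1 \<longleftrightarrow> (h1 u, h1 v) \<in> E2"
    "\<forall>u\<in>V1. le (L1 u) (L2 (h1 u))" using a(1) by (auto simp: g1 g2 sgraph_le_def)
  obtain h2 where h2: "inj_on h2 V2" "h2 ` V2 \<subseteq> V3" "\<forall>u\<in>V2. \<forall>v\<in>V2. (u, v) \<in> E2 \<longleftrightarrow> (h2 u, h2 v) \<in> E3"
    "\<forall>u\<in>V2. le (L2 u) (L3 (h2 u))" using a(2) by (auto simp: g2 g3 sgraph_le_def)
  have S1: "\<forall>u\<in>V1. L1 u \<in> S" and S2: "\<forall>u\<in>V2. L2 u \<in> S" and S3: "\<forall>u\<in>V3. L3 u \<in> S"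
    using G by (auto simp: g1 g2 g3 is_sgraph_def)
  have "inj_on (h2 \<circ> h1) V1" using h1(1) inj_on_subset[OF h2(1) h1(2)] by (rule comp_inj_on)
  moreover have "(h2 \<circ> h1) ` V1 \<subseteq> V3" using h1(2) h2(2) by auto
  moreover have "\<forall>u\<in>V1. \<forall>v\<in>V1. (u, v) \<in> E1 \<longleftrightarrow> ((h2 \<circ> h1) u, (h2 \<circ> h1) v) \<in> E3"
  proof (intro ballI)
    fix u v assume uv: "u \<in> V1" "v \<in> V1"
    then have "h1 u \<in> V2" "h1 v \<in> V2" using h1(2) by auto
    then show "(u, v) \<in> E1 \<longleftrightarrow> ((h2 \<circ> h1) u, (h2 \<circ> h1) v) \<in> E3" using uv h1(3) h2(3) by simp
  qed
  moreover have "\<forall>u\<in>V1. le (L1 u) (L3 ((h2 \<circ> h1) u))"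
  proof
    fix u assume u: "u \<in> V1"
    then have "h1 u \<in> V2" "h2 (h1 u) \<in> V3" using h1(2) h2(2) by auto
    then show "le (L1 u) (L3 ((h2 \<circ> h1) u))"
      using wqo_on_trans[OF w, of "L1 u" "L2 (h1 u)" "L3 (h2 (h1 u))"] u S1 S2 S3 h1(4) h2(4) by simp
  qed
  ultimately show ?thesis unfolding g1 g3 sgraph_le_def by blast
qed

theorem lemma15:
  fixes le :: "'s \<Rightarrow> 's \<Rightarrow> bool" and S :: "'s set" and k :: nat
  assumes "wqo_on le S"
  shows "wqo_on (sgraph_le le) {G :: (nat, 's) sgraph. is_sgraph S G \<and> path_bounded k G}"
proof (rule wqo_onI)
  fix x assume "x \<in> {G :: (nat, 's) sgraph. is_sgraph S G \<and> path_bounded k G}"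
  then show "sgraph_le le x x" using sgraph_le_refl[OF assms, of x] by simp
next
  fix x y z assume "x \<in> {G :: (nat, 's) sgraph. is_sgraph S G \<and> path_bounded k G}"
    "y \<in> {G :: (nat, 's) sgraph. is_sgraph S G \<and> path_bounded k G}"
    "z \<in> {G :: (nat, 's) sgraph. is_sgraph S G \<and> path_bounded k G}"
    "sgraph_le le x y" "sgraph_le le y z"
  then show "sgraph_le le x z" using sgraph_le_trans[OF assms, of x y z] by simp
next
  fix f :: "nat \<Rightarrow> (nat, 's) sgraph"
  assume f: "\<forall>i. f i \<in> {G :: (nat, 's) sgraph. is_sgraph S G \<and> path_bounded k G}"
  define V where "V i = fst (f i)" for i
  define E where "E i = fst (snd (f i))" for i
  define L where "L i = snd (snd (f i))" for i
  have fi: "f i = (V i, E i, L i)" for i by (simp add: V_def E_def L_def)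
  have G: "is_sgraph S (V i, E i, L i)" "path_bounded k (V i, E i, L i)" for i
    using f fi[of i] by (metis mem_Collect_eq)+
  have fin: "finite (V i)" and sym: "\<And>x y. (x, y) \<in> E i \<Longrightarrow> (y, x) \<in> E i"
    and irr: "\<And>x. (x, x) \<notin> E i" for i
    using G(1)[of i] by (auto simp: is_sgraph_def)
  have "\<exists>F. wfF (E i) F \<and> fverts F = V i \<and> (\<forall>t\<in>set F. root t \<in> V i \<and> chained (E i) t)" for i
  proof (rule build[OF sym fin])
    show "\<forall>x\<in>V i. \<exists>y\<in>V i \<inter> V i. (x, y) \<in> (E i \<inter> V i \<times> V i)\<^sup>*" by blast
  qed
  then obtain F where F: "\<And>i. wfF (E i) (F i)" "\<And>i. fverts (F i) = V i"
    "\<And>i. \<forall>t\<in>set (F i). chained (E i) t" by metis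
  define X where "X i = map (annot (E i) (L i) []) (F i)" for i
  have X: "\<forall>i. X i \<in> lists (TS (S \<times> Pow {..<k}) (k + 1))"
  proof
    fix i
    have "annot (E i) (L i) [] t \<in> TS (S \<times> Pow {..<k}) (k + 1)" if t: "t \<in> set (F i)" for t
    proof (rule depth[OF G(1) G(2)])
      show "chained (E i) t" using F(3) t by blast
      show "wfT (E i) t" using F(1)[of i] t by (simp add: wfF_def)
      show "tverts t \<subseteq> V i" using F(2)[of i] t by (auto simp: fverts_def)
    qed simp_all
    then show "X i \<in> lists (TS (S \<times> Pow {..<k}) (k + 1))" by (auto simp: X_def)
  qed
  have wL: "wqo_on (list_emb (temb (lab_le le))) (lists (TS (S \<times> Pow {..<k}) (k + 1)))"
    by (rule higman[OF wqo_TS[OF wqo_lab[OF assms]]])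
  obtain i j where ij: "i < j" "list_emb (temb (lab_le le)) (X i) (X j)"
    using wqo_onD[OF wL X] by blast
  then have le: "list_emb (\<lambda>t u. temb (lab_le le) (annot (E i) (L i) [] t) (annot (E j) (L j) [] u)) (F i) (F j)"
    by (simp add: X_def list_emb_map)
  interpret two "E i" "E j" "L i" "L j" le
    by unfold_locales (auto intro: sym simp: irr)
  have "\<exists>h. GM [] [] (fverts (F i)) (fverts (F j)) h"
  proof (rule forest_emb[OF le _ F(1) F(1)])
    fix t u assume "temb (lab_le le) (annot (E i) (L i) [] t) (annot (E j) (L j) [] u)" "wfT (E i) t" "wfT (E j) u"
    then show "\<exists>h. GM [] [] (tverts t) (tverts u) h" by (intro tree_emb) simp_all
  qed
  then obtain h where h: "GM [] [] (V i) (V j) h" using F(2) by metis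
  then have "sgraph_le le (f i) (f j)" unfolding fi sgraph_le_def GM_def by auto
  then show "\<exists>i j. i < j \<and> sgraph_le le (f i) (f j)" using ij(1) by blast
qed


end
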